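(* For $m,n\in\mathbb{N}$ (positive integers) let \[ C_m^n:=\left|\left\{(i_1,\dots,i_m)\in\{1,\dots,n\}^m:\ \forall j\in\{1,\dots,m\}\ \exists j'\in\{1,\dots,m\},\ j'\neq j,\ i_j=i_{j'}\right\}\right|. \] Then $C_m^n\leq m!\left(\frac n2\right)^{\lfloor m/2\rfloor}$. *)

theory Defs
  imports Complex_Main "HOL-Library.FuncSet"
begin

definition C :: "nat \<Rightarrow> nat \<Rightarrow> nat" where
  "C m n = card {i \<in> PiE {1..m} (\<lambda>_. {1..n}).
                   \<forall>j\<in>{1..m}. \<exists>j'\<in>{1..m}. j' \<noteq> j \<and> i j = i j'}"

end

theory Submission
  imports Defs
begin

definition V :: "nat \<Rightarrow> nat set \<Rightarrow> (nat \<Rightarrow> nat) set" where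
  "V n A = {f \<in> PiE A (\<lambda>_. {1..n}). \<forall>j\<in>A. \<exists>j'\<in>A. j' \<noteq> j \<and> f j = f j'}"

definition B :: "nat \<Rightarrow> nat \<Rightarrow> real" where
  "B n m = fact m * (real n / 2) ^ (m div 2)"

lemma pow2_fact: "(2::real) ^ M \<le> fact (Suc M)"
proof (induction M)
  case 0 then show ?case by simp
next
  case (Suc M)
  have "(2::real) ^ Suc M = 2 * 2 ^ M" by simp
  also have "\<dots> \<le> 2 * fact (Suc M)" using Suc by simp
  also have "\<dots> \<le> real (Suc (Suc M)) * fact (Suc M)"
    by (intro mult_right_mono) auto
  also have "\<dots> = fact (Suc (Suc M))" by simp
  finally show ?case .
qed

lemma sum_inv_fact: "(\<Sum>k=1..M. 1 / (fact k :: real)) \<le> 2 - 2 / 2 ^ M"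
proof (induction M)
  case 0 then show ?case by simp
next
  case (Suc M)
  have "(\<Sum>k=1..Suc M. 1 / (fact k :: real)) = (\<Sum>k=1..M. 1 / (fact k :: real)) + 1 / fact (Suc M)"
    by simp
  also have "\<dots> \<le> 2 - 2 / 2 ^ M + 1 / 2 ^ M"
    using Suc pow2_fact[of M]
    by (intro add_mono) (auto intro!: divide_left_mono)
  also have "\<dots> = 2 - 2 / 2 ^ Suc M" by (simp add: field_simps)
  finally show ?case .
qed

lemma sum_inv_fact2: "2 * (\<Sum>k=1..M. 1 / (fact k :: real)) \<le> real M + 1"
proof -
  have h: "2 * (\<Sum>k=1..M. 1 / (fact k :: real)) \<le> 4 - 4 / 2 ^ M"
    using sum_inv_fact[of M] by simp
  show ?thesis
  proof (cases "M \<ge> 3")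
    case True
    have "4 - 4 / (2::real) ^ M \<le> 4" by simp
    moreover have "real M + 1 \<ge> 4" using True by simp
    ultimately show ?thesis using h by linarith
  next
    case False
    then have "M = 0 \<or> M = 1 \<or> M = 2" by auto
    with h show ?thesis by auto
  qed
qed

lemma arith_step:
  assumes n2: "n \<ge> 2"
  shows "(\<Sum>k=1..M. real (M choose k) * (real n * B n (M - k))) \<le> B n (Suc M)"
proof -
  define d where "d = Suc M div 2"
  have termk: "real (M choose k) * (real n * B n (M - k)) \<le> 2 * (fact M / fact k) * (real n / 2) ^ d"
    if k: "k \<in> {1..M}" for k
  proof -
    have kM: "k \<le> M" "1 \<le> k" using k by auto
    have f: "fact k * fact (M - k) * real (M choose k) = fact M"
      using binomial_fact_lemma[OF kM(1)] by (metis of_nat_fact of_nat_mult)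
    have cf: "real (M choose k) * fact (M - k) = fact M / fact k"
      using f by (simp add: field_simps)
    have e: "(M - k) div 2 + 1 \<le> d" using kM unfolding d_def by auto
    have ge1: "real n / 2 \<ge> 1" using n2 by simp
    have "real n * (real n / 2) ^ ((M - k) div 2) = 2 * (real n / 2) ^ ((M - k) div 2 + 1)"
      by simp
    also have "\<dots> \<le> 2 * (real n / 2) ^ d"
      using power_increasing[OF e ge1] by simp
    finally have p: "real n * (real n / 2) ^ ((M - k) div 2) \<le> 2 * (real n / 2) ^ d" .
    have "real (M choose k) * (real n * B n (M - k)) =
          (real (M choose k) * fact (M - k)) * (real n * (real n / 2) ^ ((M - k) div 2))"
      unfolding B_def by (simp add: algebra_simps)
    also have "\<dots> \<le> (fact M / fact k) * (2 * (real n / 2) ^ d)"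
      unfolding cf by (intro mult_left_mono p) auto
    finally show ?thesis by (simp add: algebra_simps)
  qed
  have "(\<Sum>k=1..M. real (M choose k) * (real n * B n (M - k)))
        \<le> (\<Sum>k=1..M. 2 * (fact M / fact k) * (real n / 2) ^ d)"
    by (rule sum_mono) (rule termk)
  also have "\<dots> = fact M * (real n / 2) ^ d * (2 * (\<Sum>k=1..M. 1 / (fact k :: real)))"
    by (simp add: sum_distrib_left sum_distrib_right algebra_simps)
  also have "\<dots> \<le> fact M * (real n / 2) ^ d * (real M + 1)"
    by (intro mult_left_mono sum_inv_fact2) auto
  also have "\<dots> = B n (Suc M)" unfolding B_def d_def by (simp add: algebra_simps)
  finally show ?thesis .
qed

lemma sum_by_card:
  assumes "finite X"
  shows "(\<Sum>S\<in>Pow X - {{}}. g (card S)) = (\<Sum>k=1..card X. real (card X choose k) * g k)"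
proof -
  have "(\<Sum>S\<in>Pow X - {{}}. g (card S)) =
        (\<Sum>k=1..card X. \<Sum>S\<in>{S \<in> Pow X - {{}}. card S = k}. g (card S))"
    using assms
    by (intro sum.group[symmetric]) (auto simp: card_mono Suc_le_eq card_gt_0_iff dest: rev_finite_subset[OF assms])
  also have "\<dots> = (\<Sum>k=1..card X. real (card X choose k) * g k)"
  proof (rule sum.cong[OF refl])
    fix k assume k: "k \<in> {1..card X}"
    have eq: "{S \<in> Pow X - {{}}. card S = k} = {S. S \<subseteq> X \<and> card S = k}"
      using k by auto
    have "(\<Sum>S\<in>{S \<in> Pow X - {{}}. card S = k}. g (card S)) = (\<Sum>S\<in>{S. S \<subseteq> X \<and> card S = k}. g k)"
      unfolding eq by (rule sum.cong) auto
    also have "\<dots> = real (card X choose k) * g k"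
      using n_subsets[OF assms, of k] by simp
    finally show "(\<Sum>S\<in>{S \<in> Pow X - {{}}. card S = k}. g (card S)) = real (card X choose k) * g k" .
  qed
  finally show ?thesis .
qed

lemma main:
  assumes n2: "n \<ge> 2"
  shows "finite A \<Longrightarrow> real (card (V n A)) \<le> B n (card A)"
proof (induction "card A" arbitrary: A rule: less_induct)
  case less
  show ?case
  proof (cases "A = {}")
    case True
    then show ?thesis unfolding V_def B_def by simp
  next
    case False
    then obtain a where a: "a \<in> A" by auto
    define X where "X = A - {a}"
    have fX: "finite X" using less.prems X_def by auto
    have cX: "card A = Suc (card X)" using less.prems a X_def
      by (metis card_Suc_Diff1)
    define Sf where "Sf f = {j \<in> X. f j = f a}" for f :: "nat \<Rightarrow> nat"
    define h where "h f = (Sf f, (f a, restrict f (X - Sf f)))" for f :: "nat \<Rightarrow> nat"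
    define T where "T = Sigma (Pow X - {{}}) (\<lambda>S. {1..n} \<times> V n (X - S))"
    have inj: "inj_on h (V n A)"
    proof (rule inj_onI)
      fix f g assume f: "f \<in> V n A" and g: "g \<in> V n A" and hfg: "h f = h g"
      have S: "Sf f = Sf g" and fa: "f a = g a" and r: "restrict f (X - Sf f) = restrict g (X - Sf f)"
        using hfg unfolding h_def by auto
      show "f = g"
      proof
        fix x
        show "f x = g x"
        proof (cases "x \<in> A")
          case False
          then show ?thesis using f g unfolding V_def by (auto simp: PiE_def extensional_def)
        next
          case True
          show ?thesis
          proof (cases "x = a")
            case True with fa show ?thesis by simp
          next
            case xa: False
            show ?thesis
            proof (cases "x \<in> Sf f")
              case True
              then have "x \<in> Sf g" using S by simp
              with True fa show ?thesis unfolding Sf_def by simp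
            next
              case False
              then have "x \<in> X - Sf f" using xa \<open>x \<in> A\<close> X_def by auto
              then show ?thesis using fun_cong[OF r, of x] by simp
            qed
          qed
        qed
      qed
    qed
    have img: "h ` V n A \<subseteq> T"
    proof
      fix y assume "y \<in> h ` V n A"
      then obtain f where f: "f \<in> V n A" and y: "y = h f" by auto
      have fP: "f \<in> PiE A (\<lambda>_. {1..n})" and fv: "\<forall>j\<in>A. \<exists>j'\<in>A. j' \<noteq> j \<and> f j = f j'"
        using f unfolding V_def by auto
      have S1: "Sf f \<in> Pow X - {{}}"
      proof -
        obtain j' where "j' \<in> A" "j' \<noteq> a" "f a = f j'" using fv a by blast
        then have "j' \<in> Sf f" unfolding Sf_def X_def by auto
        then show ?thesis unfolding Sf_def by auto
      qed
      have S2: "f a \<in> {1..n}" using fP a by auto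
      have S3: "restrict f (X - Sf f) \<in> V n (X - Sf f)"
        unfolding V_def
      proof (intro CollectI conjI ballI)
        show "restrict f (X - Sf f) \<in> PiE (X - Sf f) (\<lambda>_. {1..n})"
          using fP X_def by auto
      next
        fix j assume j: "j \<in> X - Sf f"
        then have jA: "j \<in> A" and fj: "f j \<noteq> f a" using X_def Sf_def by auto
        obtain j' where j': "j' \<in> A" "j' \<noteq> j" "f j = f j'" using fv jA by blast
        have "j' \<noteq> a" using fj j' by auto
        then have "j' \<in> X - Sf f" using j' fj unfolding X_def Sf_def by auto
        then show "\<exists>j'\<in>X - Sf f. j' \<noteq> j \<and> restrict f (X - Sf f) j = restrict f (X - Sf f) j'"
          using j j' by auto
      qed
      show "y \<in> T" unfolding y h_def T_def using S1 S2 S3 by auto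
    qed
    have finV: "finite (V n Y)" if "finite Y" for Y
      unfolding V_def by (rule finite_subset[of _ "PiE Y (\<lambda>_. {1..n})"]) (auto intro: finite_PiE that)
    have finT: "finite T" unfolding T_def using fX finV by (auto intro!: finite_SigmaI)
    have "card (V n A) \<le> card T"
      using card_inj_on_le[OF inj img finT] .
    then have "real (card (V n A)) \<le> real (card T)" by simp
    also have "real (card T) = (\<Sum>S\<in>Pow X - {{}}. real n * real (card (V n (X - S))))"
      unfolding T_def using fX finV
      by (subst card_SigmaI) (auto simp: card_cartesian_product)
    also have "\<dots> \<le> (\<Sum>S\<in>Pow X - {{}}. real n * B n (card X - card S))"
    proof (rule sum_mono)
      fix S assume S: "S \<in> Pow X - {{}}"
      then have fS: "finite S" using fX by (auto intro: finite_subset)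
      have cc: "card (X - S) = card X - card S" using S fS by (auto intro: card_Diff_subset)
      have "card (X - S) < card A" using cc cX by simp
      then have "real (card (V n (X - S))) \<le> B n (card (X - S))"
        using less.hyps fX by auto
      then show "real n * real (card (V n (X - S))) \<le> real n * B n (card X - card S)"
        using cc by (intro mult_left_mono) auto
    qed
    also have "\<dots> = (\<Sum>k=1..card X. real (card X choose k) * (real n * B n (card X - k)))"
      using sum_by_card[OF fX, of "\<lambda>k. real n * B n (card X - k)"] .
    also have "\<dots> \<le> B n (card A)" unfolding cX by (rule arith_step[OF n2])
    finally show ?thesis .
  qed
qed

theorem lemma5p5:
  fixes m n :: nat
  assumes "m \<ge> 1" and "n \<ge> 1"
  shows "real (C m n) \<le> fact m * (real n / 2) ^ (m div 2)"
proof -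
  have CV: "C m n = card (V n {1..m})" unfolding C_def V_def by simp
  show ?thesis
  proof (cases "n \<ge> 2")
    case True
    then show ?thesis using main[OF True, of "{1..m}"] unfolding CV B_def by simp
  next
    case False
    then have n1: "n = 1" using assms by simp
    have "card (V n {1..m}) \<le> card (PiE {1..m} (\<lambda>_. {1..n}))"
      unfolding V_def by (intro card_mono) (auto intro: finite_PiE)
    also have "\<dots> = 1" using n1 by (simp add: card_PiE)
    finally have c1: "real (C m n) \<le> 1" unfolding CV by simp
    obtain M where M: "m = Suc M" using assms by (cases m) auto
    have "(2::real) ^ (m div 2) \<le> 2 ^ M" using M by (intro power_increasing) auto
    also have "\<dots> \<le> fact m" using pow2_fact[of M] M by simp
    finally have "1 \<le> fact m * (1 / 2::real) ^ (m div 2)"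
      by (simp add: power_divide field_simps)
    then show ?thesis using c1 n1 by simp
  qed
qed

end
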